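(* Let $\mu$ be a locally finite Borel measure on $\mathbb{R}$. Then there is a Lebesgue null set $\mathcal{M}\subseteq\mathbb{R}$ such that for every $x_0\in\mathbb{R}\setminus\mathcal{M}$, every $c_0>0$ and every $0<\varepsilon<\delta<c_0$ there is a constant $C$, depending on $x_0$, $c_0$ and $\mu$, such that for all $t>0$ \[ \int_{[x_0,x_0+\delta]}\mathrm{d}\mu(x)\,e^{-t(x-x_0)}\le C\frac{1-e^{-t\delta}}{t} \] and \[ \int_{[x_0+\varepsilon,x_0+\delta]}\mathrm{d}\mu(x)\,e^{-t(x-x_0)}\le Ce^{-t\varepsilon/2}\frac{1-e^{-t\delta/2}}{t/2}\le C\frac{e^{-t\varepsilon/2}}{t/2}. \] *)

theory Defs
  imports "HOL-Analysis.Analysis"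
begin

end

theory Submission
  imports Defs
begin


lemma geo_bound:
  fixes n :: nat
  shows "(\<Sum>j<n. (real j + 1) * exp (- real j)) \<le> 6"
proof -
  define q where "q = exp (-1/2::real)"
  have q0: "0 < q" unfolding q_def by simp
  have q1: "q \<le> 2/3"
  proof -
    have "1 + 1/2 \<le> exp (1/2::real)" using exp_ge_add_one_self[of "1/2"] by simp
    then have "1 / exp (1/2::real) \<le> 2/3" by (simp add: field_simps)
    then show ?thesis unfolding q_def by (simp add: exp_minus inverse_eq_divide)
  qed
  have tm: "(real j + 1) * exp (- real j) \<le> 2 * q ^ j" for j
  proof -
    have "1 + real j / 2 \<le> exp (real j / 2)" using exp_ge_add_one_self[of "real j/2"] by simp
    then have a: "real j + 1 \<le> 2 * exp (real j / 2)" by linarith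
    have "exp (- real j) = exp (real j / 2) * exp (- real j) / exp (real j /2)" by simp
    have b: "q ^ j = exp (- real j / 2)" unfolding q_def
      by (simp add: exp_of_nat_mult[symmetric])
    have "(real j + 1) * exp (- real j) \<le> 2 * exp (real j / 2) * exp (- real j)"
      using a by (intro mult_right_mono) auto
    also have "\<dots> = 2 * exp (real j / 2 + (- real j))" by (simp only: exp_add mult.assoc)
    also have "real j / 2 + (- real j) = - real j / 2" by simp
    finally show ?thesis using b by simp
  qed
  have "(\<Sum>j<n. (real j + 1) * exp (- real j)) \<le> (\<Sum>j<n. 2 * q ^ j)"
    by (intro sum_mono tm)
  also have "\<dots> = 2 * ((1 - q ^ n) / (1 - q))"
    using q1 by (simp add: sum_distrib_left[symmetric] sum_gp_strict)
  also have "\<dots> \<le> 2 * (1 / (1 - q))"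
    using q0 q1 by (intro mult_left_mono divide_right_mono) auto
  also have "\<dots> \<le> 6" using q1 by (simp add: field_simps)
  finally show ?thesis .
qed

lemma key:
  fixes M :: "real measure"
  assumes sets: "sets M = sets borel" and fin: "emeasure M {x0..x0+\<delta>} < \<infinity>"
    and \<delta>: "0 < \<delta>" and t: "0 < t" and K: "0 \<le> K"
    and bnd: "\<And>h. 0 < h \<Longrightarrow> h \<le> \<delta> \<Longrightarrow> measure M {x0..x0+h} \<le> K*h"
  shows "(LINT x:{x0..x0+\<delta>}|M. exp (- t * (x - x0))) \<le> 12*K * (1 - exp (- t * \<delta>)) / t"
proof -
  define A where "A = {x0..x0+\<delta>}"
  have sp: "space M = UNIV" using sets_eq_imp_space_eq[OF sets] by simp
  have Ameas: "A \<in> sets M" unfolding A_def sets by simp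
  have finA: "emeasure M A < \<infinity>" using fin A_def by simp
  have f_meas: "(\<lambda>x. indicator A x *\<^sub>R exp (- t * (x - x0))) \<in> borel_measurable M"
  proof -
    have [measurable]: "A \<in> sets borel" unfolding A_def by simp
    show ?thesis unfolding measurable_cong_sets[OF sets refl] by measurable
  qed
  have intA: "integrable M (\<lambda>x. indicator A x *\<^sub>R exp (- t * (x - x0)))"
  proof (rule Bochner_Integration.integrable_bound[OF integrable_real_indicator[OF Ameas finA] f_meas])
    show "AE x in M. norm (indicator A x *\<^sub>R exp (- t * (x - x0))) \<le> norm (indicator A x :: real)"
    proof (intro AE_I2)
      fix x show "norm (indicator A x *\<^sub>R exp (- t * (x - x0))) \<le> norm (indicator A x :: real)"
        by (cases "x \<in> A") (use t in \<open>auto simp: A_def mult_nonneg_nonneg\<close>)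
    qed
  qed
  have LHS: "(LINT x:{x0..x0+\<delta>}|M. exp (- t * (x - x0))) = integral\<^sup>L M (\<lambda>x. indicator A x *\<^sub>R exp (- t * (x - x0)))"
    by (simp add: set_lebesgue_integral_def A_def)
  show ?thesis
  proof (cases "t * \<delta> \<le> 1")
    case True
    have "integral\<^sup>L M (\<lambda>x. indicator A x *\<^sub>R exp (- t * (x - x0))) \<le> integral\<^sup>L M (indicator A)"
    proof (rule integral_mono[OF intA integrable_real_indicator[OF Ameas finA]])
      fix x show "indicator A x *\<^sub>R exp (- t * (x - x0)) \<le> (indicator A x :: real)"
        by (cases "x \<in> A") (use t in \<open>auto simp: A_def mult_nonneg_nonneg\<close>)
    qed
    also have "\<dots> = measure M A" by (simp add: sp)
    also have "\<dots> \<le> K * \<delta>" using bnd[of \<delta>] \<delta> by (simp add: A_def)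
    also have "\<dots> \<le> 12*K * (1 - exp (- t * \<delta>)) / t"
    proof -
      define s where "s = t * \<delta>"
      have s0: "0 < s" using t \<delta> by (simp add: s_def)
      have "1 + s \<le> exp s" by (rule exp_ge_add_one_self)
      then have "(1 + s) * exp (-s) \<le> 1" by (simp add: exp_minus field_simps)
      then have e1: "s * exp (-s) \<le> 1 - exp (-s)" by (simp add: algebra_simps)
      have "exp (-1) \<le> exp (-s)" using True by (simp add: s_def)
      moreover have "1/3 \<le> exp (-1::real)" using exp_le by (simp add: exp_minus field_simps)
      ultimately have "1/3 \<le> exp (-s)" by linarith
      then have "s * (1/3) \<le> s * exp (-s)" using s0 by (intro mult_left_mono) auto
      then have "s / 3 \<le> s * exp (-s)" by simp
      moreover have "exp (-s) \<le> 1" using s0 by simp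
      ultimately have h3: "s / 3 \<le> 1 - exp (-s)" "0 \<le> 1 - exp (-s)" using e1 by auto
      then have "s \<le> 3 * (1 - exp (-s))" by simp
      moreover have "3 * (1 - exp (-s)) \<le> 12 * (1 - exp (-s))"
        using mult_right_mono[OF _ h3(2), of 3 12] by simp
      ultimately have "s \<le> 12 * (1 - exp (-s))" by (rule order_trans)
      then have "K * s \<le> K * (12 * (1 - exp (-s)))" using K by (rule mult_left_mono)
      have "K * \<delta> = (K * s) / t" using t by (simp add: s_def)
      also have "\<dots> \<le> K * (12 * (1 - exp (-s))) / t"
        using \<open>K * s \<le> _\<close> t by (intro divide_right_mono) auto
      also have "\<dots> = 12*K * (1 - exp (- t * \<delta>)) / t" by (simp add: s_def)
      finally show ?thesis .
    qed
    finally show ?thesis using LHS by simp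
  next
    case False
    define n where "n = nat \<lfloor>t * \<delta>\<rfloor> + 1"
    define S where "S j = A \<inter> {x0 + real j / t ..< x0 + (real j + 1) / t}" for j :: nat
    have Smeas: "S j \<in> sets M" for j unfolding S_def A_def sets by simp
    have Ssub: "S j \<subseteq> A" for j unfolding S_def by auto
    have finS: "emeasure M (S j) < \<infinity>" for j
      using emeasure_mono[OF Ssub Ameas, of j] finA by (rule le_less_trans)
    have Sbnd: "measure M (S j) \<le> K * ((real j + 1) / t)" for j
    proof -
      define h where "h = min \<delta> ((real j + 1) / t)"
      have h0: "0 < h" using \<delta> t by (simp add: h_def)
      have "S j \<subseteq> {x0..x0+h}" unfolding S_def A_def h_def by auto
      then have "measure M (S j) \<le> measure M {x0..x0+h}"
      proof (rule measure_mono_fmeasurable[OF _ Smeas])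
        have "{x0..x0+h} \<subseteq> {x0..x0+\<delta>}" by (auto simp: h_def)
        then have "emeasure M {x0..x0+h} \<le> emeasure M {x0..x0+\<delta>}"
          by (rule emeasure_mono) (simp add: sets)
        then have "emeasure M {x0..x0+h} < \<infinity>" using fin by (rule le_less_trans)
        then show "{x0..x0+h} \<in> fmeasurable M" by (simp add: fmeasurable_def sets)
      qed
      also have "\<dots> \<le> K * h" using bnd h0 by (simp add: h_def)
      also have "\<dots> \<le> K * ((real j + 1) / t)" using K by (intro mult_left_mono) (auto simp: h_def)
      finally show ?thesis .
    qed
    have intS: "integrable M (\<lambda>x. \<Sum>j<n. exp (- real j) * indicator (S j) x)"
      by (intro Bochner_Integration.integrable_sum integrable_mult_right integrable_real_indicator Smeas finS)
    have "integral\<^sup>L M (\<lambda>x. indicator A x *\<^sub>R exp (- t * (x - x0))) \<le> integral\<^sup>L M (\<lambda>x. \<Sum>j<n. exp (- real j) * indicator (S j) x)"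
    proof (rule integral_mono[OF intA intS])
      fix x
      show "indicator A x *\<^sub>R exp (- t * (x - x0)) \<le> (\<Sum>j<n. exp (- real j) * indicator (S j) x)"
      proof (cases "x \<in> A")
        case False then show ?thesis by (simp add: sum_nonneg)
      next
        case True
        define j0 where "j0 = nat \<lfloor>t * (x - x0)\<rfloor>"
        have x0x: "0 \<le> t * (x - x0)" using True t by (simp add: A_def)
        have j0le: "real j0 \<le> t * (x - x0)" using x0x by (simp add: j0_def)
        have j0gt: "t * (x - x0) < real j0 + 1" using x0x by (simp add: j0_def)
        have "t * (x - x0) \<le> t * \<delta>" using True t by (simp add: A_def)
        then have j0n: "j0 < n" unfolding n_def j0_def using x0x
          by (simp add: nat_le_iff floor_mono less_Suc_eq_le nat_mono)
        have xS: "x \<in> S j0" unfolding S_def using True t j0le j0gt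
          by (simp add: field_simps)
        have "indicator A x *\<^sub>R exp (- t * (x - x0)) = exp (- t * (x - x0))" using True by simp
        also have "\<dots> \<le> exp (- real j0)" using j0le by simp
        also have "\<dots> = exp (- real j0) * indicator (S j0) x" using xS by simp
        also have "\<dots> \<le> (\<Sum>j<n. exp (- real j) * indicator (S j) x)"
          using j0n by (intro member_le_sum) auto
        finally show ?thesis .
      qed
    qed
    also have "\<dots> = (\<Sum>j<n. integral\<^sup>L M (\<lambda>x. exp (- real j) * indicator (S j) x))"
      by (rule Bochner_Integration.integral_sum) (intro integrable_mult_right integrable_real_indicator Smeas finS)
    also have "\<dots> = (\<Sum>j<n. exp (- real j) * measure M (S j))"
      by (simp add: sp)
    also have "\<dots> \<le> (\<Sum>j<n. exp (- real j) * (K * ((real j + 1) / t)))"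
      using Sbnd by (intro sum_mono mult_left_mono) auto
    also have "\<dots> = K / t * (\<Sum>j<n. (real j + 1) * exp (- real j))"
      by (simp add: sum_distrib_left field_simps)
    also have "\<dots> \<le> K / t * 6" using K t geo_bound by (intro mult_left_mono) auto
    also have "\<dots> \<le> 12*K * (1 - exp (- t * \<delta>)) / t"
    proof -
      have "exp (- t * \<delta>) \<le> exp (-1)" using False by simp
      moreover have "exp (-1::real) \<le> 1/2"
        using exp_ge_add_one_self[of 1] by (simp add: exp_minus field_simps)
      ultimately have "1/2 \<le> 1 - exp (- t * \<delta>)" by linarith
      then have "12 * K * (1/2) \<le> 12 * K * (1 - exp (- t * \<delta>))" using K
        by (intro mult_left_mono) auto
      then have k6: "K * 6 \<le> 12 * K * (1 - exp (- t * \<delta>))" by simp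
      have "K / t * 6 = (K * 6) / t" by simp
      also have "\<dots> \<le> 12 * K * (1 - exp (- t * \<delta>)) / t"
        using k6 t by (intro divide_right_mono) auto
      finally show ?thesis .
    qed
    finally show ?thesis using LHS by simp
  qed
qed



lemma emeasure_UN_countable_le:
  assumes sets[measurable]: "\<And>i. i \<in> I \<Longrightarrow> X i \<in> sets M" and I: "countable I"
  shows "emeasure M (\<Union>(X ` I)) \<le> (\<integral>\<^sup>+i. emeasure M (X i) \<partial>count_space I)"
proof -
  have le: "indicator (\<Union>(X ` I)) x \<le> (\<integral>\<^sup>+ i. indicator (X i) x \<partial>count_space I)" for x
  proof (cases "x \<in> \<Union>(X ` I)")
    case True
    then obtain j where j: "j \<in> I" "x \<in> X j" by auto
    have "(\<integral>\<^sup>+ i. indicator {j} i \<partial>count_space I) \<le> (\<integral>\<^sup>+ i. indicator (X i) x \<partial>count_space I)"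
      using j by (intro nn_integral_mono) (auto split: split_indicator)
    moreover have "(\<integral>\<^sup>+ i. indicator {j} i \<partial>count_space I) = (1::ennreal)"
      using j by (subst nn_integral_indicator) auto
    ultimately show ?thesis using True by simp
  qed simp
  have U: "\<Union>(X ` I) \<in> sets M" using I sets by (intro sets.countable_UN') auto
  have "emeasure M (\<Union>(X ` I)) = (\<integral>\<^sup>+x. indicator (\<Union>(X ` I)) x \<partial>M)"
    using U by simp
  also have "\<dots> \<le> (\<integral>\<^sup>+x. \<integral>\<^sup>+ i. indicator (X i) x \<partial>count_space I \<partial>M)"
    by (intro nn_integral_mono le)
  also have "\<dots> = (\<integral>\<^sup>+i. \<integral>\<^sup>+x. indicator (X i) x \<partial>M \<partial>count_space I)"
    using I sets by (intro nn_integral_count_space_nn_integral) auto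
  also have "\<dots> = (\<integral>\<^sup>+i. emeasure M (X i) \<partial>count_space I)"
    using sets by (intro nn_integral_cong) auto
  finally show ?thesis .
qed

lemma ball_finite_M:
  fixes M :: "real measure"
  assumes locfin: "\<And>K. compact K \<Longrightarrow> emeasure M K < \<infinity>" and sets: "sets M = sets borel"
  shows "emeasure M (ball x r) < \<infinity>"
proof -
  have "emeasure M (ball x r) \<le> emeasure M (cball x r)"
    by (rule emeasure_mono) (auto simp: sets)
  then show ?thesis using locfin[of "cball x r"] by (simp add: le_less_trans)
qed

lemma E_open:
  fixes M :: "real measure"
  assumes locfin: "\<And>K. compact K \<Longrightarrow> emeasure M K < \<infinity>" and sets: "sets M = sets borel"
  shows "open {x. \<exists>r. 0 < r \<and> r < 1 \<and> ennreal (real k * r) < emeasure M (ball x r)}"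
  (is "open ?E")
proof (unfold open_contains_ball, intro ballI)
  fix x assume "x \<in> ?E"
  then obtain r where r: "0 < r" "r < 1" "ennreal (real k * r) < emeasure M (ball x r)" by auto
  define m where "m = enn2real (emeasure M (ball x r))"
  have em: "emeasure M (ball x r) = ennreal m"
    using ball_finite_M[OF locfin sets, of x r] unfolding m_def
    by (simp add: ennreal_enn2real_if less_top)
  have m0: "0 \<le> m" by (simp add: m_def)
  have km: "real k * r < m" using r(3) em m0 r(1)
    by (simp add: ennreal_less_iff)
  define \<eta> where "\<eta> = min ((1 - r) / 2) ((m - real k * r) / (2 * (real k + 1)))"
  have \<eta>0: "0 < \<eta>" using r km by (simp add: \<eta>_def)
  have "\<eta> \<le> (1 - r) / 2" unfolding \<eta>_def by (rule min.cobounded1)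
  then have "2 * \<eta> \<le> 1 - r" by simp
  then have \<eta>1: "r + \<eta> < 1" using r(1,2) by linarith
  have "real k * \<eta> \<le> real k * ((m - real k * r) / (2 * (real k + 1)))"
    by (intro mult_left_mono) (auto simp: \<eta>_def)
  also have "\<dots> < m - real k * r"
  proof -
    have "real k / (2 * (real k + 1)) < 1" by (simp add: field_simps)
    then have "real k / (2 * (real k + 1)) * (m - real k * r) < 1 * (m - real k * r)"
      using km by (intro mult_strict_right_mono) auto
    then show ?thesis by (simp add: field_simps)
  qed
  finally have k\<eta>: "real k * (r + \<eta>) < m" by (simp add: algebra_simps)
  show "\<exists>e>0. ball x e \<subseteq> ?E"
  proof (intro exI conjI subsetI)
    show "0 < \<eta>" by fact
    fix y assume y: "y \<in> ball x \<eta>"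
    have sub: "ball x r \<subseteq> ball y (r + \<eta>)"
    proof
      fix z assume "z \<in> ball x r"
      then have "dist x z < r" by simp
      moreover have "dist y x < \<eta>" using y by (simp add: dist_commute)
      ultimately show "z \<in> ball y (r + \<eta>)" using dist_triangle[of y z x] by simp
    qed
    have "ennreal (real k * (r + \<eta>)) < ennreal m"
    proof (rule ennreal_lessI[OF _ k\<eta>])
      have "0 \<le> real k * r" using r(1) by simp
      then show "0 < m" using km by linarith
    qed
    also have "\<dots> \<le> emeasure M (ball y (r + \<eta>))"
      unfolding em[symmetric] by (rule emeasure_mono[OF sub]) (simp add: sets)
    finally show "y \<in> ?E" using r \<eta>0 \<eta>1 by (intro CollectI exI[of _ "r + \<eta>"]) auto
  qed
qed

lemma E_small:
  fixes M :: "real measure"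
  assumes locfin: "\<And>K. compact K \<Longrightarrow> emeasure M K < \<infinity>" and sets: "sets M = sets borel"
    and k: "0 < k"
  shows "emeasure lborel ({x. \<exists>r. 0 < r \<and> r < 1 \<and> ennreal (real k * r) < emeasure M (ball x r)} \<inter> ball 0 R)
     \<le> ennreal (10 / real k) * emeasure M (ball 0 (R + 1))"
  (is "emeasure lborel ?S \<le> _")
proof -
  have "\<forall>x\<in>?S. \<exists>r. 0 < r \<and> r < 1 \<and> ennreal (real k * r) < emeasure M (ball x r)" by auto
  then have "\<exists>rr. \<forall>x\<in>?S. 0 < rr x \<and> rr x < 1 \<and> ennreal (real k * rr x) < emeasure M (ball x (rr x))"
    by (rule bchoice)
  then obtain rr where rr0: "\<forall>x\<in>?S. 0 < rr x \<and> rr x < 1 \<and> ennreal (real k * rr x) < emeasure M (ball x (rr x))"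
    by blast
  have rr: "\<And>x. x \<in> ?S \<Longrightarrow> 0 < rr x \<and> rr x < 1 \<and> ennreal (real k * rr x) < emeasure M (ball x (rr x))"
    using rr0 by blast
  have rB: "\<And>i. i \<in> ?S \<Longrightarrow> 0 < rr i \<and> rr i \<le> 1" using rr by (auto intro: less_imp_le)
  have cov: "?S \<subseteq> (\<Union>x\<in>?S. ball x (rr x))" using rr by fastforce
  obtain C where C: "countable C" "C \<subseteq> ?S"
    and pw: "pairwise (\<lambda>i j. disjnt (ball i (rr i)) (ball j (rr j))) C"
    and cov5: "?S \<subseteq> (\<Union>i\<in>C. ball i (5 * rr i))"
    using Vitali_covering_lemma_balls[where a="\<lambda>x. x", OF cov rB] by blast
  have rC: "\<And>i. i \<in> C \<Longrightarrow> 0 < rr i \<and> rr i < 1 \<and> ennreal (real k * rr i) < emeasure M (ball i (rr i))"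
    using C(2) rr by blast
  have "emeasure lborel ?S \<le> emeasure lborel (\<Union>i\<in>C. ball i (5 * rr i))"
  proof (rule emeasure_mono[OF cov5])
    have "open (\<Union>i\<in>C. ball i (5 * rr i))" by auto
    then show "(\<Union>i\<in>C. ball i (5 * rr i)) \<in> sets lborel" by simp
  qed
  also have "\<dots> \<le> (\<integral>\<^sup>+i. emeasure lborel (ball i (5 * rr i)) \<partial>count_space C)"
    using C(1) by (intro emeasure_UN_countable_le) auto
  also have "\<dots> = (\<integral>\<^sup>+i. ennreal (10 * rr i) \<partial>count_space C)"
  proof (intro nn_integral_cong)
    fix i assume "i \<in> space (count_space C)"
    then have "0 < rr i" using rC by auto
    then show "emeasure lborel (ball i (5 * rr i)) = ennreal (10 * rr i)"
      by (simp add: ball_eq_greaterThanLessThan)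
  qed
  also have "\<dots> \<le> (\<integral>\<^sup>+i. ennreal (10 / real k) * emeasure M (ball i (rr i)) \<partial>count_space C)"
  proof (intro nn_integral_mono)
    fix i assume "i \<in> space (count_space C)"
    then have ri: "0 < rr i" "ennreal (real k * rr i) < emeasure M (ball i (rr i))" using rC by auto
    have "ennreal (10 * rr i) = ennreal (10 / real k) * ennreal (real k * rr i)"
      using k ri(1) by (simp add: ennreal_mult[symmetric])
    also have "\<dots> \<le> ennreal (10 / real k) * emeasure M (ball i (rr i))"
      using ri(2) by (intro mult_left_mono) auto
    finally show "ennreal (10 * rr i) \<le> ennreal (10 / real k) * emeasure M (ball i (rr i))" .
  qed
  also have "\<dots> = ennreal (10 / real k) * (\<integral>\<^sup>+i. emeasure M (ball i (rr i)) \<partial>count_space C)"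
    by (rule nn_integral_cmult) simp
  also have "(\<integral>\<^sup>+i. emeasure M (ball i (rr i)) \<partial>count_space C) = emeasure M (\<Union>i\<in>C. ball i (rr i))"
  proof (rule emeasure_UN_countable[symmetric])
    show "disjoint_family_on (\<lambda>i. ball i (rr i)) C"
      using pw unfolding disjoint_family_on_def pairwise_def disjnt_def by blast
  qed (auto simp: sets C(1))
  also have "ennreal (10 / real k) * emeasure M (\<Union>i\<in>C. ball i (rr i)) \<le> ennreal (10 / real k) * emeasure M (ball 0 (R + 1))"
  proof (intro mult_left_mono emeasure_mono)
    show "(\<Union>i\<in>C. ball i (rr i)) \<subseteq> ball 0 (R + 1)"
    proof clarify
      fix i z assume i: "i \<in> C" and z: "z \<in> ball i (rr i)"
      have d1: "dist 0 i < R" using i C(2) by auto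
      have d2: "rr i < 1" using i rC by auto
      have d3: "dist i z < rr i" using z by simp
      show "z \<in> ball 0 (R + 1)" using d1 d2 d3 dist_triangle[of 0 z i] by simp
    qed
  qed (auto simp: sets)
  finally show ?thesis .
qed

lemma nullset:
  fixes M :: "real measure"
  assumes locfin: "\<And>K. compact K \<Longrightarrow> emeasure M K < \<infinity>" and sets: "sets M = sets borel"
  shows "\<exists>N. N \<in> null_sets lborel \<and> (\<forall>x0. x0 \<notin> N \<longrightarrow>
           (\<exists>k::nat. \<forall>r. 0 < r \<and> r < 1 \<longrightarrow> emeasure M (ball x0 r) \<le> ennreal (real k * r)))"
proof -
  define E where "E k = {x. \<exists>r. 0 < r \<and> r < 1 \<and> ennreal (real k * r) < emeasure M (ball x r)}" for k :: nat
  define N where "N = (\<Inter>k. E k)"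
  have Eopen: "open (E k)" for k unfolding E_def by (rule E_open[OF locfin sets])
  have Eb: "E k \<in> sets borel" for k using Eopen by (rule borel_open)
  have Nmeas: "N \<in> sets borel" unfolding N_def using Eb by (intro sets.countable_INT) auto
  have loc: "emeasure lborel (N \<inter> ball 0 (real R)) = 0" for R :: nat
  proof -
    have Lfin: "emeasure M (ball 0 (real R + 1)) < \<infinity>" by (rule ball_finite_M[OF locfin sets])
    then obtain L where L: "emeasure M (ball 0 (real R + 1)) = ennreal L" "0 \<le> L"
      by (cases "emeasure M (ball 0 (real R + 1))") auto
    have bnd: "emeasure lborel (N \<inter> ball 0 (real R)) \<le> ennreal (10 * L / real k)" if k: "0 < k" for k :: nat
    proof -
      have "emeasure lborel (N \<inter> ball 0 (real R)) \<le> emeasure lborel (E k \<inter> ball 0 (real R))"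
        using Eb by (intro emeasure_mono) (auto simp: N_def)
      also have "\<dots> \<le> ennreal (10 / real k) * emeasure M (ball 0 (real R + 1))"
        unfolding E_def by (rule E_small[OF locfin sets k])
      also have "\<dots> = ennreal (10 * L / real k)"
        using L by (simp add: ennreal_mult[symmetric])
      finally show ?thesis .
    qed
    show ?thesis
    proof (rule ccontr)
      assume ne: "emeasure lborel (N \<inter> ball 0 (real R)) \<noteq> 0"
      have "emeasure lborel (N \<inter> ball 0 (real R)) \<le> ennreal (10 * L / real (1::nat))" by (rule bnd) simp
      then obtain a where a: "emeasure lborel (N \<inter> ball 0 (real R)) = ennreal a" "0 \<le> a"
        by (cases "emeasure lborel (N \<inter> ball 0 (real R))") (auto simp: top_unique)
      with ne have a0: "0 < a" by auto
      obtain k :: nat where k: "10 * L / a < real k" using reals_Archimedean2 by blast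
      have "0 \<le> 10 * L / a" using L(2) a0 by simp
      then have k0: "0 < k" using k by linarith
      have "10 * L < real k * a" using k a0 by (simp add: field_simps)
      then have lt: "10 * L / real k < a" using k0 by (simp add: field_simps)
      have "ennreal a \<le> ennreal (10 * L / real k)" using bnd[OF k0] a by simp
      then have "a \<le> 10 * L / real k" using L(2) ennreal_le_iff[of "10 * L / real k" a] by simp
      with lt show False by linarith
    qed
  qed
  have Nun: "N = (\<Union>R::nat. N \<inter> ball 0 (real R))"
  proof (intro equalityI subsetI)
    fix x assume "x \<in> N"
    obtain R :: nat where "dist 0 x < real R" using reals_Archimedean2 by blast
    with \<open>x \<in> N\<close> show "x \<in> (\<Union>R::nat. N \<inter> ball 0 (real R))" by auto
  qed auto
  have "N \<in> null_sets lborel"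
  proof (subst Nun, rule null_sets_UN)
    fix R :: nat
    show "N \<inter> ball 0 (real R) \<in> null_sets lborel"
      using loc[of R] Nmeas by (intro null_setsI) auto
  qed
  moreover have "\<exists>k::nat. \<forall>r. 0 < r \<and> r < 1 \<longrightarrow> emeasure M (ball x0 r) \<le> ennreal (real k * r)"
    if "x0 \<notin> N" for x0
  proof -
    from that obtain k where "x0 \<notin> E k" by (auto simp: N_def)
    then show ?thesis unfolding E_def by (intro exI[of _ k]) (auto intro: leI)
  qed
  ultimately show ?thesis by blast
qed


lemma intg:
  fixes M :: "real measure"
  assumes sets: "sets M = sets borel" and fin: "emeasure M {a..b} < \<infinity>"
    and a: "x0 \<le> a" and s: "0 \<le> s"
  shows "integrable M (\<lambda>x. indicator {a..b} x *\<^sub>R exp (- s * (x - x0)))"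
proof -
  have Ameas: "{a..b} \<in> sets M" unfolding sets by simp
  have f_meas: "(\<lambda>x. indicator {a..b} x *\<^sub>R exp (- s * (x - x0))) \<in> borel_measurable M"
    unfolding measurable_cong_sets[OF sets refl] by measurable
  show ?thesis
  proof (rule Bochner_Integration.integrable_bound[OF integrable_real_indicator[OF Ameas fin] f_meas])
    show "AE x in M. norm (indicator {a..b} x *\<^sub>R exp (- s * (x - x0))) \<le> norm (indicator {a..b} x :: real)"
    proof (intro AE_I2)
      fix x show "norm (indicator {a..b} x *\<^sub>R exp (- s * (x - x0))) \<le> norm (indicator {a..b} x :: real)"
        by (cases "x \<in> {a..b}") (use a s in \<open>auto simp: mult_nonneg_nonneg\<close>)
    qed
  qed
qed

lemma per_point:
  fixes M :: "real measure"
  assumes borel: "sets M = sets borel"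
    and locfin: "\<And>K. compact K \<Longrightarrow> emeasure M K < \<infinity>"
    and c0: "0 < c0"
    and kb: "\<forall>r. 0 < r \<and> r < 1 \<longrightarrow> emeasure M (ball x0 r) \<le> ennreal (real k * r)"
  shows "\<exists>C::real.
       \<forall>\<epsilon> \<delta>. 0 < \<epsilon> \<and> \<epsilon> < \<delta> \<and> \<delta> < c0 \<longrightarrow>
       (\<forall>t::real > 0.
          (LINT x:{x0..x0+\<delta>}|M. exp (- t * (x - x0))) \<le> C * (1 - exp (- t * \<delta>)) / t
        \<and> (LINT x:{x0+\<epsilon>..x0+\<delta>}|M. exp (- t * (x - x0)))
            \<le> C * exp (- t * \<epsilon> / 2) * (1 - exp (- t * \<delta> / 2)) / (t / 2)
        \<and> C * exp (- t * \<epsilon> / 2) * (1 - exp (- t * \<delta> / 2)) / (t / 2)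
            \<le> C * exp (- t * \<epsilon> / 2) / (t / 2))"
proof -
  define Mc where "Mc = measure M {x0..x0+c0}"
  define K where "K = 2 * real k + 4 * Mc"
  have Mc0: "0 \<le> Mc" by (simp add: Mc_def)
  have K0: "0 \<le> K" using Mc0 by (simp add: K_def)
  have finI: "emeasure M {a..b} < \<infinity>" for a b :: real by (rule locfin) simp
  have bnd: "measure M {x0..x0+h} \<le> K * h" if h: "0 < h" "h \<le> c0" for h
  proof (cases "h < 1/2")
    case True
    have "emeasure M {x0..x0+h} \<le> emeasure M (ball x0 (2 * h))"
    proof (rule emeasure_mono)
      show "{x0..x0+h} \<subseteq> ball x0 (2 * h)" using h by (auto simp: dist_real_def)
    qed (simp add: borel)
    also have "\<dots> \<le> ennreal (real k * (2 * h))" using kb True h by auto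
    finally have "measure M {x0..x0+h} \<le> real k * (2 * h)"
      unfolding measure_def using h by (intro enn2real_leI) auto
    also have "\<dots> \<le> K * h" using h Mc0 by (simp add: K_def algebra_simps)
    finally show ?thesis .
  next
    case False
    have "measure M {x0..x0+h} \<le> Mc"
      unfolding Mc_def
    proof (rule measure_mono_fmeasurable)
      show "{x0..x0+h} \<subseteq> {x0..x0+c0}" using h by auto
      show "{x0..x0+h} \<in> sets M" by (simp add: borel)
      show "{x0..x0+c0} \<in> fmeasurable M" using finI by (simp add: fmeasurable_def borel)
    qed
    also have "Mc \<le> 4 * Mc * h"
    proof -
      have "Mc * 1 \<le> Mc * (4 * h)" using False Mc0 by (intro mult_left_mono) auto
      then show ?thesis by (simp add: algebra_simps)
    qed
    also have "\<dots> \<le> K * h" using h by (simp add: K_def algebra_simps)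
    finally show ?thesis .
  qed
  show ?thesis
  proof (intro exI[of _ "12 * K"] allI impI conjI)
    fix \<epsilon> \<delta> t :: real
    assume ed: "0 < \<epsilon> \<and> \<epsilon> < \<delta> \<and> \<delta> < c0" and t: "0 < t"
    have \<delta>0: "0 < \<delta>" using ed by simp
    have bnd': "\<And>h. 0 < h \<Longrightarrow> h \<le> \<delta> \<Longrightarrow> measure M {x0..x0+h} \<le> K*h"
      using bnd ed by auto
    show "(LINT x:{x0..x0+\<delta>}|M. exp (- t * (x - x0))) \<le> 12 * K * (1 - exp (- t * \<delta>)) / t"
      by (rule key[OF borel finI \<delta>0 t K0 bnd'])
    have t2: "0 < t / 2" using t by simp
    have key2: "(LINT x:{x0..x0+\<delta>}|M. exp (- (t/2) * (x - x0))) \<le> 12 * K * (1 - exp (- (t/2) * \<delta>)) / (t/2)"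
      by (rule key[OF borel finI \<delta>0 t2 K0 bnd'])
    have i1: "integrable M (\<lambda>x. indicator {x0+\<epsilon>..x0+\<delta>} x *\<^sub>R exp (- t * (x - x0)))"
      using ed t by (intro intg[OF borel finI]) auto
    have i2: "integrable M (\<lambda>x. indicator {x0..x0+\<delta>} x *\<^sub>R exp (- (t/2) * (x - x0)))"
      using ed t by (intro intg[OF borel finI]) auto
    have "(LINT x:{x0+\<epsilon>..x0+\<delta>}|M. exp (- t * (x - x0)))
        = integral\<^sup>L M (\<lambda>x. indicator {x0+\<epsilon>..x0+\<delta>} x *\<^sub>R exp (- t * (x - x0)))"
      by (simp add: set_lebesgue_integral_def)
    also have "\<dots> \<le> integral\<^sup>L M (\<lambda>x. exp (- t * \<epsilon> / 2) * (indicator {x0..x0+\<delta>} x *\<^sub>R exp (- (t/2) * (x - x0))))"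
    proof (rule integral_mono[OF i1 integrable_mult_right[OF i2]])
      fix x
      show "indicator {x0+\<epsilon>..x0+\<delta>} x *\<^sub>R exp (- t * (x - x0))
          \<le> exp (- t * \<epsilon> / 2) * (indicator {x0..x0+\<delta>} x *\<^sub>R exp (- (t/2) * (x - x0)))"
      proof (cases "x \<in> {x0+\<epsilon>..x0+\<delta>}")
        case False then show ?thesis by (simp add: mult_nonneg_nonneg)
      next
        case True
        then have x1: "x \<in> {x0..x0+\<delta>}" using ed by auto
        have "t * \<epsilon> \<le> t * (x - x0)" using True t by (intro mult_left_mono) auto
        then have "- t * (x - x0) \<le> - t * \<epsilon> / 2 + - (t/2) * (x - x0)" by simp
        then have "exp (- t * (x - x0)) \<le> exp (- t * \<epsilon> / 2 + - (t/2) * (x - x0))" by simp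
        also have "\<dots> = exp (- t * \<epsilon> / 2) * exp (- (t/2) * (x - x0))" by (rule exp_add)
        finally show ?thesis using True x1 by simp
      qed
    qed
    also have "\<dots> = exp (- t * \<epsilon> / 2) * (LINT x:{x0..x0+\<delta>}|M. exp (- (t/2) * (x - x0)))"
      by (simp add: set_lebesgue_integral_def)
    also have "\<dots> \<le> exp (- t * \<epsilon> / 2) * (12 * K * (1 - exp (- (t/2) * \<delta>)) / (t/2))"
      using key2 by (intro mult_left_mono) auto
    also have "\<dots> = 12 * K * exp (- t * \<epsilon> / 2) * (1 - exp (- t * \<delta> / 2)) / (t / 2)"
    proof -
      have "- (t/2) * \<delta> = - t * \<delta> / 2" by simp
      then show ?thesis by (simp only: mult.assoc mult.commute mult.left_commute times_divide_eq_right)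
    qed
    finally show "(LINT x:{x0+\<epsilon>..x0+\<delta>}|M. exp (- t * (x - x0)))
        \<le> 12 * K * exp (- t * \<epsilon> / 2) * (1 - exp (- t * \<delta> / 2)) / (t / 2)" .
    have CE: "0 \<le> 12 * K * exp (- t * \<epsilon> / 2)" using K0 by simp
    have "12 * K * exp (- t * \<epsilon> / 2) * (1 - exp (- t * \<delta> / 2)) \<le> 12 * K * exp (- t * \<epsilon> / 2) * 1"
      using CE by (intro mult_left_mono) auto
    then show "12 * K * exp (- t * \<epsilon> / 2) * (1 - exp (- t * \<delta> / 2)) / (t / 2)
        \<le> 12 * K * exp (- t * \<epsilon> / 2) / (t / 2)"
      using t by (intro divide_right_mono) auto
  qed
qed

theorem lemma4p15:
  fixes M :: "real measure"
  assumes borel: "sets M = sets borel"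
    and locfin: "\<And>K. compact K \<Longrightarrow> emeasure M K < \<infinity>"
  shows "\<exists>N. N \<in> null_sets lborel \<and>
    (\<forall>x0. x0 \<notin> N \<longrightarrow> (\<forall>c0 > 0. \<exists>C::real.
       \<forall>\<epsilon> \<delta>. 0 < \<epsilon> \<and> \<epsilon> < \<delta> \<and> \<delta> < c0 \<longrightarrow>
       (\<forall>t::real > 0.
          (LINT x:{x0..x0+\<delta>}|M. exp (- t * (x - x0))) \<le> C * (1 - exp (- t * \<delta>)) / t
        \<and> (LINT x:{x0+\<epsilon>..x0+\<delta>}|M. exp (- t * (x - x0)))
            \<le> C * exp (- t * \<epsilon> / 2) * (1 - exp (- t * \<delta> / 2)) / (t / 2)
        \<and> C * exp (- t * \<epsilon> / 2) * (1 - exp (- t * \<delta> / 2)) / (t / 2)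
            \<le> C * exp (- t * \<epsilon> / 2) / (t / 2))))"
proof -
  obtain N where N: "N \<in> null_sets lborel" and Nk: "\<And>x0. x0 \<notin> N \<Longrightarrow>
      (\<exists>k::nat. \<forall>r. 0 < r \<and> r < 1 \<longrightarrow> emeasure M (ball x0 r) \<le> ennreal (real k * r))"
    using nullset[OF locfin borel] by blast
  show ?thesis
  proof (intro exI[of _ N] conjI N allI impI)
    fix x0 c0 :: real assume x0: "x0 \<notin> N" and c0: "0 < c0"
    obtain k where kb: "\<forall>r. 0 < r \<and> r < 1 \<longrightarrow> emeasure M (ball x0 r) \<le> ennreal (real k * r)"
      using Nk[OF x0] by blast
    show "\<exists>C::real.
       \<forall>\<epsilon> \<delta>. 0 < \<epsilon> \<and> \<epsilon> < \<delta> \<and> \<delta> < c0 \<longrightarrow>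
       (\<forall>t::real > 0.
          (LINT x:{x0..x0+\<delta>}|M. exp (- t * (x - x0))) \<le> C * (1 - exp (- t * \<delta>)) / t
        \<and> (LINT x:{x0+\<epsilon>..x0+\<delta>}|M. exp (- t * (x - x0)))
            \<le> C * exp (- t * \<epsilon> / 2) * (1 - exp (- t * \<delta> / 2)) / (t / 2)
        \<and> C * exp (- t * \<epsilon> / 2) * (1 - exp (- t * \<delta> / 2)) / (t / 2)
            \<le> C * exp (- t * \<epsilon> / 2) / (t / 2))"
      by (rule per_point[OF borel locfin c0 kb])
  qed
qed

end
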